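(* Fix $\eta\in[0,1]$ and an integer $N\ge0$. For every policy $P(u^{+}\mid u,q)\in\mathcal P^{L}_{\pi}$ (lower-bound construction of the context), the induced stationary distribution satisfies $$\pi(S=0\mid u,q)=\bar\eta^{\,u+1}\qquad\text{for all } q\in[0:N] \text{ and all } u \text{ in the support of } U \text{ given } Q=q,$$ in particular $\pi_{S\mid U,Q}$ does not depend on the policy.
   Context: $\bar\eta=1-\eta$, $[a:b]=\{a,\dots,b\}$. Binary energy-harvesting battery law: $P(S^{+}=0\mid x,s)=\bar\eta\,\mathbb{1}\{x=s\}$ for $x\le s$, $x,s\in\{0,1\}$. Lower-bound construction: $\mathcal Q=\mathcal U=[0:N]$; $g_L(q,1)=0$ for all $q$, $g_L(q,0)=q+1$ for $q\in[0:N-1]$, $g_L(N,0)=0$; $f(u^{+},s)=s\,\mathbb{1}\{u^{+}=0\}$. A policy $P(u^{+}\mid u,q)$ induces the kernel $T(s^{+},u^{+},q^{+}\mid s,u,q)=\sum_xP(u^{+}\mid u,q)\mathbb{1}\{x=f(u^{+},s)\}\mathbb{1}\{q^{+}=g_L(q,x)\}P(s^{+}\mid x,s)$ on $\{0,1\}\times\mathcal U\times\mathcal Q$. $\mathcal P^{L}_{\pi}$: policies for which $T$ has a unique stationary distribution $\pi(s,u,q)$, such that for $q\in[0:N-1]$ the variable $U$ given $Q=q$ lies in $[0:q]$ and $P(u^{+}\mid u,q)=0$ unless $u^{+}\in\{0,u+1\}$, and for $q=N$, $U$ lies in $[0:N]$ and $P(0\mid u,N)=1$. *)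

theory Defs
  imports Complex_Main
begin

definition states :: "nat \<Rightarrow> (nat \<times> nat \<times> nat) set" where
  "states N = {(s,u,q). s \<le> 1 \<and> u \<le> N \<and> q \<le> N}"

text \<open>Battery law: P(S+ = s' | x, s), with P(S+=0|x,s) = (1-eta) [x = s] for x \<le> s.\<close>
definition battery :: "real \<Rightarrow> nat \<Rightarrow> nat \<Rightarrow> nat \<Rightarrow> real" where
  "battery \<eta> s' x s =
     (let p0 = (1 - \<eta>) * (if x = s then 1 else 0) in if s' = 0 then p0 else 1 - p0)"

definition gL :: "nat \<Rightarrow> nat \<Rightarrow> nat \<Rightarrow> nat" where
  "gL N q x = (if x = 1 then 0 else if q < N then q + 1 else 0)"

definition fL :: "nat \<Rightarrow> nat \<Rightarrow> nat" where
  "fL u' s = s * (if u' = 0 then 1 else 0)"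

text \<open>Policy encoding: pol u q u' = P(u+ = u' | u, q).  Kernel
  T(s',u',q' | s,u,q) (the sum over x collapses since x = f(u',s) is deterministic).\<close>
definition kernel ::
  "real \<Rightarrow> nat \<Rightarrow> (nat \<Rightarrow> nat \<Rightarrow> nat \<Rightarrow> real) \<Rightarrow> nat \<times> nat \<times> nat \<Rightarrow> nat \<times> nat \<times> nat \<Rightarrow> real" where
  "kernel \<eta> N pol = (\<lambda>(s',u',q') (s,u,q).
     (\<Sum>x\<in>{0,1::nat}. pol u q u' * (if x = fL u' s then 1 else 0)
        * (if q' = gL N q x then 1 else 0) * battery \<eta> s' x s))"

definition is_policy :: "nat \<Rightarrow> (nat \<Rightarrow> nat \<Rightarrow> nat \<Rightarrow> real) \<Rightarrow> bool" where
  "is_policy N pol \<longleftrightarrow>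
     (\<forall>u\<le>N. \<forall>q\<le>N. (\<forall>u'\<le>N. pol u q u' \<ge> 0) \<and> (\<Sum>u'\<le>N. pol u q u') = 1)"

definition stationary ::
  "real \<Rightarrow> nat \<Rightarrow> (nat \<Rightarrow> nat \<Rightarrow> nat \<Rightarrow> real) \<Rightarrow> (nat \<times> nat \<times> nat \<Rightarrow> real) \<Rightarrow> bool" where
  "stationary \<eta> N pol \<pi> \<longleftrightarrow>
     (\<forall>z\<in>states N. \<pi> z \<ge> 0) \<and> (\<Sum>z\<in>states N. \<pi> z) = 1 \<and>
     (\<forall>z'\<in>states N. \<pi> z' = (\<Sum>z\<in>states N. \<pi> z * kernel \<eta> N pol z' z))"

definition unique_stationary ::
  "real \<Rightarrow> nat \<Rightarrow> (nat \<Rightarrow> nat \<Rightarrow> nat \<Rightarrow> real) \<Rightarrow> (nat \<times> nat \<times> nat \<Rightarrow> real) \<Rightarrow> bool" where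
  "unique_stationary \<eta> N pol \<pi> \<longleftrightarrow> stationary \<eta> N pol \<pi> \<and>
     (\<forall>\<sigma>. stationary \<eta> N pol \<sigma> \<longrightarrow> (\<forall>z\<in>states N. \<sigma> z = \<pi> z))"

definition margUQ :: "(nat \<times> nat \<times> nat \<Rightarrow> real) \<Rightarrow> nat \<Rightarrow> nat \<Rightarrow> real" where
  "margUQ \<pi> u q = \<pi> (0,u,q) + \<pi> (1,u,q)"

definition in_PL :: "real \<Rightarrow> nat \<Rightarrow> (nat \<Rightarrow> nat \<Rightarrow> nat \<Rightarrow> real) \<Rightarrow> (nat \<times> nat \<times> nat \<Rightarrow> real) \<Rightarrow> bool" where
  "in_PL \<eta> N pol \<pi> \<longleftrightarrow>
     is_policy N pol \<and> unique_stationary \<eta> N pol \<pi> \<and>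
     (\<forall>q<N. (\<forall>u\<le>N. q < u \<longrightarrow> margUQ \<pi> u q = 0) \<and>
            (\<forall>u\<le>N. \<forall>u'\<le>N. u' \<noteq> 0 \<and> u' \<noteq> u + 1 \<longrightarrow> pol u q u' = 0)) \<and>
     (\<forall>u\<le>N. pol u N 0 = 1)"

end

theory Submission
  imports Defs
begin

lemma states_fin: "finite (states N)"
  by (rule finite_subset[of _ "{0..1} \<times> {0..N} \<times> {0..N}"]) (auto simp: states_def)

lemma collapse:
  assumes "\<forall>z\<in>states N. z \<notin> {(0,a,b),(1,a,b)} \<longrightarrow> g z = 0" "a \<le> N" "b \<le> N"
  shows "sum g (states N) = g (0,a,b) + g (1,a,b)"
proof -
  have "sum g (states N) = sum g {(0,a,b),(1,a,b)}"
    by (rule sum.mono_neutral_right) (use assms in \<open>auto simp: states_fin states_def\<close>)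
  then show ?thesis by simp
qed

lemma kernel_eq:
  assumes "s \<le> 1"
  shows "kernel \<eta> N pol (s',u',q') (s,u,q) =
    pol u q u' * (if q' = gL N q (fL u' s) then 1 else 0) * battery \<eta> s' (fL u' s) s"
proof -
  have "fL u' s \<in> {0,1}" using assms by (auto simp: fL_def)
  then show ?thesis unfolding kernel_def by (auto simp: fL_def)
qed

theorem lemma4:
  fixes \<eta> :: real and N :: nat
    and pol :: "nat \<Rightarrow> nat \<Rightarrow> nat \<Rightarrow> real" and \<pi> :: "nat \<times> nat \<times> nat \<Rightarrow> real"
  assumes "0 \<le> \<eta>" "\<eta> \<le> 1"
    and "in_PL \<eta> N pol \<pi>"
  shows "\<forall>q\<le>N. \<forall>u\<le>N. margUQ \<pi> u q > 0 \<longrightarrow>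
           \<pi> (0,u,q) / margUQ \<pi> u q = (1 - \<eta>) ^ (u + 1)"
proof -
  have pol: "is_policy N pol" and st: "stationary \<eta> N pol \<pi>"
    and polq: "\<And>q u u'. q < N \<Longrightarrow> u \<le> N \<Longrightarrow> u' \<le> N \<Longrightarrow> u' \<noteq> 0 \<Longrightarrow> u' \<noteq> u + 1 \<Longrightarrow> pol u q u' = 0"
    and polN0: "\<And>u. u \<le> N \<Longrightarrow> pol u N 0 = 1"
    using assms(3) unfolding in_PL_def unique_stationary_def by auto
  have nn: "\<And>z. z \<in> states N \<Longrightarrow> \<pi> z \<ge> 0"
    and eq: "\<And>z'. z' \<in> states N \<Longrightarrow> \<pi> z' = (\<Sum>z\<in>states N. \<pi> z * kernel \<eta> N pol z' z)"
    using st unfolding stationary_def by auto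
  have polN: "pol u N u' = 0" if "u \<le> N" "u' \<le> N" "u' \<noteq> 0" for u u'
  proof -
    have s1: "(\<Sum>v\<le>N. pol u N v) = 1" and nnp: "\<forall>v\<le>N. pol u N v \<ge> 0"
      using pol that unfolding is_policy_def by auto
    have "(\<Sum>v\<le>N. pol u N v) = pol u N 0 + (\<Sum>v\<in>{..N}-{0}. pol u N v)"
      by (simp add: sum.remove)
    then have "(\<Sum>v\<in>{..N}-{0}. pol u N v) = 0" using s1 polN0[OF that(1)] by simp
    moreover have "\<forall>v\<in>{..N}-{0}. pol u N v \<ge> 0" using nnp by auto
    ultimately have "\<forall>v\<in>{..N}-{0}. pol u N v = 0"
      by (subst (asm) sum_nonneg_eq_0_iff) auto
    then show ?thesis using that by auto
  qed
  have base: "\<pi> (0,0,q) = (1-\<eta>) * margUQ \<pi> 0 q" if "q \<le> N" for q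
  proof -
    have m0: "(0,0,q) \<in> states N" "(1,0,q) \<in> states N" using that by (auto simp: states_def)
    have pw: "kernel \<eta> N pol (0,0,q) z = (1-\<eta>) * (kernel \<eta> N pol (0,0,q) z + kernel \<eta> N pol (1,0,q) z)"
      if "z \<in> states N" for z
    proof -
      obtain s u r where z: "z = (s,u,r)" "s \<le> 1" using \<open>z \<in> states N\<close> by (cases z) (auto simp: states_def)
      show ?thesis unfolding z(1) kernel_eq[OF z(2)]
        by (simp add: fL_def battery_def algebra_simps)
    qed
    have "\<pi> (0,0,q) = (\<Sum>z\<in>states N. \<pi> z * kernel \<eta> N pol (0,0,q) z)" using eq m0 by blast
    also have "\<dots> = (\<Sum>z\<in>states N. (1-\<eta>) * (\<pi> z * kernel \<eta> N pol (0,0,q) z + \<pi> z * kernel \<eta> N pol (1,0,q) z))"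
    proof (rule sum.cong[OF refl])
      fix z assume z: "z \<in> states N"
      have "\<pi> z * kernel \<eta> N pol (0,0,q) z = \<pi> z * ((1-\<eta>) * (kernel \<eta> N pol (0,0,q) z + kernel \<eta> N pol (1,0,q) z))"
        using pw[OF z] by (rule arg_cong[where f="\<lambda>t. \<pi> z * t"])
      also have "\<dots> = (1-\<eta>) * (\<pi> z * kernel \<eta> N pol (0,0,q) z + \<pi> z * kernel \<eta> N pol (1,0,q) z)"
        by (simp only: algebra_simps)
      finally show "\<pi> z * kernel \<eta> N pol (0,0,q) z = (1-\<eta>) * (\<pi> z * kernel \<eta> N pol (0,0,q) z + \<pi> z * kernel \<eta> N pol (1,0,q) z)" .
    qed
    also have "\<dots> = (1-\<eta>) * ((\<Sum>z\<in>states N. \<pi> z * kernel \<eta> N pol (0,0,q) z) + (\<Sum>z\<in>states N. \<pi> z * kernel \<eta> N pol (1,0,q) z))"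
      by (simp only: sum.distrib[symmetric] sum_distrib_left)
    also have "\<dots> = (1-\<eta>) * margUQ \<pi> 0 q" using eq m0 by (simp add: margUQ_def)
    finally show ?thesis .
  qed
  have supp: "kernel \<eta> N pol (s',Suc u,q') z = 0"
    if "z \<in> states N" "Suc u \<le> N" "z \<notin> {(0,u,q'-1),(1,u,q'-1)} \<or> q' = 0" for s' u q' z
  proof -
    obtain s v r where z: "z = (s,v,r)" "s \<le> 1" "v \<le> N" "r \<le> N"
      using \<open>z \<in> states N\<close> by (cases z) (auto simp: states_def)
    have K: "kernel \<eta> N pol (s',Suc u,q') z = pol v r (Suc u) * (if q' = gL N r 0 then 1 else 0) * battery \<eta> s' 0 s"
      unfolding z(1) kernel_eq[OF z(2)] by (simp add: fL_def)
    show ?thesis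
    proof (cases "r < N")
      case True
      show ?thesis
      proof (cases "q' = r + 1 \<and> v = u")
        case True
        then show ?thesis using that z by auto
      next
        case False
        then have "pol v r (Suc u) = 0 \<or> q' \<noteq> gL N r 0"
          using polq[OF \<open>r < N\<close> z(3) that(2)] by (auto simp: gL_def \<open>r < N\<close>)
        then show ?thesis using K by auto
      qed
    next
      case False
      then have "r = N" using z by auto
      then show ?thesis using K polN[OF z(3) that(2)] by simp
    qed
  qed
  have step0: "\<pi> (s',Suc u,0) = 0" if "s' \<le> 1" "Suc u \<le> N" for s' u
  proof -
    have "(s',Suc u,0) \<in> states N" using that by (auto simp: states_def)
    then have "\<pi> (s',Suc u,0) = (\<Sum>z\<in>states N. \<pi> z * kernel \<eta> N pol (s',Suc u,0) z)" using eq by blast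
    also have "\<dots> = 0" by (rule sum.neutral) (use supp that in auto)
    finally show ?thesis .
  qed
  have stepK: "\<pi> (s',Suc u,Suc r) = \<pi> (0,u,r) * (pol u r (Suc u) * battery \<eta> s' 0 0)
       + \<pi> (1,u,r) * (pol u r (Suc u) * battery \<eta> s' 0 1)"
    if "s' \<le> 1" "Suc u \<le> N" "Suc r \<le> N" for s' u r
  proof -
    have "(s',Suc u,Suc r) \<in> states N" using that by (auto simp: states_def)
    then have "\<pi> (s',Suc u,Suc r) = (\<Sum>z\<in>states N. \<pi> z * kernel \<eta> N pol (s',Suc u,Suc r) z)" using eq by blast
    also have "\<dots> = \<pi> (0,u,r) * kernel \<eta> N pol (s',Suc u,Suc r) (0,u,r)
        + \<pi> (1,u,r) * kernel \<eta> N pol (s',Suc u,Suc r) (1,u,r)"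
      by (rule collapse) (use supp that in auto)
    also have "\<dots> = \<pi> (0,u,r) * (pol u r (Suc u) * battery \<eta> s' 0 0)
       + \<pi> (1,u,r) * (pol u r (Suc u) * battery \<eta> s' 0 1)"
      using that by (simp add: kernel_eq fL_def gL_def)
    finally show ?thesis .
  qed
  show ?thesis
  proof (intro allI impI)
    fix q u
    assume "q \<le> N" "u \<le> N" "margUQ \<pi> u q > 0"
    then show "\<pi> (0,u,q) / margUQ \<pi> u q = (1 - \<eta>) ^ (u + 1)"
    proof (induction u arbitrary: q)
      case 0
      then show ?case using base[OF 0(1)] by simp
    next
      case (Suc u)
      show ?case
      proof (cases q)
        case 0
        then show ?thesis using Suc.prems step0[of 0 u] step0[of 1 u] by (simp add: margUQ_def)
      next
        case (Suc r)
        define p where "p = pol u r (Suc u)"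
        have e0: "\<pi> (0,Suc u,q) = (1-\<eta>) * p * \<pi> (0,u,r)"
          using stepK[of 0 u r] Suc Suc.prems by (simp add: battery_def p_def)
        have e1: "\<pi> (1,Suc u,q) = \<eta> * p * \<pi> (0,u,r) + p * \<pi> (1,u,r)"
          using stepK[of 1 u r] Suc Suc.prems by (simp add: battery_def p_def algebra_simps)
        have mm: "margUQ \<pi> (Suc u) q = p * margUQ \<pi> u r"
          using e0 e1 by (simp add: margUQ_def algebra_simps)
        have mnn: "margUQ \<pi> u r \<ge> 0" using nn[of "(0,u,r)"] nn[of "(1,u,r)"] Suc Suc.prems
          by (auto simp: margUQ_def states_def)
        have "margUQ \<pi> u r \<noteq> 0" "p \<noteq> 0" using mm Suc.prems by auto
        then have mpos: "margUQ \<pi> u r > 0" using mnn by simp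
        have IH: "\<pi> (0,u,r) / margUQ \<pi> u r = (1-\<eta>)^(u+1)"
          using Suc.IH[of r] Suc Suc.prems mpos by simp
        have "\<pi> (0,Suc u,q) / margUQ \<pi> (Suc u) q = (1-\<eta>) * (\<pi> (0,u,r) / margUQ \<pi> u r)"
          using e0 mm \<open>p \<noteq> 0\<close> by simp
        then show ?thesis using IH by simp
      qed
    qed
  qed
qed

end
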